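(* Let $\mathbf{b}=(b_n)_{n\in\mathbb{N}_0}$ be a $D$-sequence with $\frac{b_{n+1}}{b_n}\to\infty$, and let $\iota:(\mathbb{Z},\tau_{\mathbf{b}})\to c_0(\mathbb{T})$, $k\mapsto(\frac{k}{b_n}+\mathbb{Z})_{n\in\mathbb{N}}$. Then $\iota(\mathbb{Z})$ is dually embedded in $c_0(\mathbb{T})$: every continuous character of $(\mathbb{Z},\tau_{\mathbf{b}})$ is of the form $\psi\circ\iota$ for some continuous character $\psi$ of $c_0(\mathbb{T})$.
   Context: $\mathbb{T}=\mathbb{R}/\mathbb{Z}$; $\mathbb{T}_m=[-\frac{1}{4m},\frac{1}{4m}]+\mathbb{Z}$. $c_0(\mathbb{T})$ is the group of sequences $(x_n)_{n\in\mathbb{N}}$ in $\mathbb{T}$ converging to $0$, with the topology of uniform convergence. A $D$-sequence is a sequence $\mathbf{b}=(b_n)_{n\in\mathbb{N}_0}$ of natural numbers with $b_0=1$, $b_n\mid b_{n+1}$, $b_n\neq b_{n+1}$. $\tau_{\mathbf{b}}$ is the group topology on $\mathbb{Z}$ with neighborhood basis at $0$ given by $V_{\mathbf{b},m}=\{k\in\mathbb{Z}: \frac{k}{b_n}+\mathbb{Z}\in\mathbb{T}_m \text{ for all } n\in\mathbb{N}\}$, $m\in\mathbb{N}$. *)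

theory Defs
  imports "HOL-Analysis.Analysis"
begin

text \<open>The circle group T = R/Z is represented by real representatives; tnorm x is the
  distance of x to the nearest integer, i.e. the norm of x + Z in T.\<close>
definition tnorm :: "real \<Rightarrow> real" where
  "tnorm x = \<bar>x - real_of_int (round x)\<bar>"

definition inTm :: "nat \<Rightarrow> real \<Rightarrow> bool" where
  "inTm m x \<longleftrightarrow> tnorm x \<le> 1 / (4 * real m)"

definition D_sequence :: "(nat \<Rightarrow> nat) \<Rightarrow> bool" where
  "D_sequence b \<longleftrightarrow> (\<forall>n. b n > 0) \<and> b 0 = 1 \<and>
     (\<forall>n. b n dvd b (Suc n) \<and> b n \<noteq> b (Suc n))"

text \<open>Neighbourhood basis V_{b,m} of 0 of tau_b (n ranges over N = {1,2,...}).\<close>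
definition Vb :: "(nat \<Rightarrow> nat) \<Rightarrow> nat \<Rightarrow> int set" where
  "Vb b m = {k. \<forall>n\<ge>1. inTm m (real_of_int k / real (b n))}"

text \<open>Continuous characters of (Z, tau_b), with values in the unit circle
  (identified with T via t + Z |-> exp(2 pi i t)).  Continuity at every point k0,
  using the neighbourhood basis k0 + V_{b,m}.\<close>
definition cont_char_Zb :: "(nat \<Rightarrow> nat) \<Rightarrow> (int \<Rightarrow> complex) \<Rightarrow> bool" where
  "cont_char_Zb b chi \<longleftrightarrow>
     (\<forall>k. cmod (chi k) = 1) \<and> (\<forall>k l. chi (k + l) = chi k * chi l) \<and>
     (\<forall>k0. \<forall>\<epsilon>>0. \<exists>m\<ge>1. \<forall>k\<in>Vb b m. cmod (chi (k0 + k) - chi k0) < \<epsilon>)"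

text \<open>c_0(T), indexed by N = {1,2,...} via the shift n |-> Suc n: real sequences whose
  classes mod Z converge to 0.\<close>
definition c0T :: "(nat \<Rightarrow> real) set" where
  "c0T = {x. (\<lambda>n. tnorm (x n)) \<longlonglongrightarrow> 0}"

text \<open>Continuous characters of c_0(T) (topology of uniform convergence), given on
  representatives: homomorphisms into the unit circle that are trivial on integer-valued
  sequences (so well defined on c_0(T)) and continuous for the uniform metric.\<close>
definition cont_char_c0T :: "((nat \<Rightarrow> real) \<Rightarrow> complex) \<Rightarrow> bool" where
  "cont_char_c0T \<psi> \<longleftrightarrow>
     (\<forall>x\<in>c0T. cmod (\<psi> x) = 1) \<and>
     (\<forall>x\<in>c0T. \<forall>y\<in>c0T. \<psi> (\<lambda>n. x n + y n) = \<psi> x * \<psi> y) \<and>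
     (\<forall>x\<in>c0T. (\<forall>n. x n \<in> \<int>) \<longrightarrow> \<psi> x = 1) \<and>
     (\<forall>x0\<in>c0T. \<forall>\<epsilon>>0. \<exists>\<delta>>0. \<forall>y\<in>c0T.
        (\<forall>n. tnorm (y n - x0 n) < \<delta>) \<longrightarrow> cmod (\<psi> y - \<psi> x0) < \<epsilon>)"

text \<open>iota k = (k / b_n + Z)_{n in N}, with coordinate n in N stored at index n - 1.\<close>
definition iota :: "(nat \<Rightarrow> nat) \<Rightarrow> int \<Rightarrow> nat \<Rightarrow> real" where
  "iota b k = (\<lambda>n. real_of_int k / real (b (Suc n)))"

end

theory Submission imports Defs begin

lemma tnorm_le: "tnorm x \<le> \<bar>x - real_of_int n\<bar>"
  unfolding tnorm_def by (rule round_diff_minimal)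

lemma tnorm_half: "tnorm x \<le> 1/2"
  unfolding tnorm_def using of_int_round_le[of x] of_int_round_ge[of x] by linarith

lemma tnorm_ge: assumes "1/4 \<le> S" "S \<le> 3/4" shows "1/4 \<le> tnorm (real_of_int z + S)"
proof -
  define w where "w = z - round (real_of_int z + S)"
  have "tnorm (real_of_int z + S) = \<bar>real_of_int w + S\<bar>" unfolding tnorm_def w_def by simp
  moreover have "1/4 \<le> \<bar>real_of_int w + S\<bar>"
  proof (cases "w \<ge> 0")
    case True then show ?thesis using assms by simp
  next
    case False then have "real_of_int w \<le> -1" by simp
    then show ?thesis using assms by simp
  qed
  ultimately show ?thesis by simp
qed

definition ee :: "real \<Rightarrow> complex" where "ee x = exp (\<i> * of_real (2*pi*x))"

lemma ee_int: "ee (x + real_of_int n) = ee x"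
proof -
  have "ee (x + real_of_int n) = exp (\<i> * of_real (2*pi*x) + \<i> * (of_int n * (of_real pi * 2)))"
    unfolding ee_def by (simp add: algebra_simps)
  then show ?thesis unfolding ee_def by (simp only: exp_plus_2pin)
qed

lemma ee_add: "ee (x + y) = ee x * ee y"
  unfolding ee_def by (simp add: distrib_left exp_add[symmetric])

lemma ee_norm [simp]: "cmod (ee x) = 1" unfolding ee_def by simp

lemma ee_far: assumes "1/4 \<le> tnorm x" shows "1 \<le> cmod (ee x - 1)"
proof -
  define y where "y = x - real_of_int (round x)"
  have ey: "ee x = ee y" using ee_int[of y "round x"] by (simp add: y_def)
  have "\<bar>y\<bar> \<le> 1/2" using tnorm_half[of x] by (simp add: tnorm_def y_def)
  have "1/4 \<le> \<bar>y\<bar>" using assms by (simp add: tnorm_def y_def)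
  have c: "cos (2*pi*y) \<le> 0"
  proof -
    have "cos (2*pi*y) = cos (2*pi*\<bar>y\<bar>)" by (cases "y \<ge> 0") (auto simp: abs_if)
    also have "\<dots> = - cos (pi - 2*pi*\<bar>y\<bar>)" by (simp add: cos_diff)
    also have "\<dots> \<le> 0"
      using cos_ge_zero[of "pi - 2*pi*\<bar>y\<bar>"] \<open>1/4 \<le> \<bar>y\<bar>\<close> \<open>\<bar>y\<bar> \<le> 1/2\<close> pi_gt_zero by (auto simp: field_simps)
    finally show ?thesis .
  qed
  have "Re (ee y - 1) = cos (2*pi*y) - 1" unfolding ee_def by (simp add: Re_exp)
  then have "1 \<le> \<bar>Re (ee y - 1)\<bar>" using c by simp
  also have "\<dots> \<le> cmod (ee y - 1)" by (rule abs_Re_le_cmod)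
  finally show ?thesis using ey by simp
qed


lemma Dpos: "D_sequence b \<Longrightarrow> b n > 0" by (simp add: D_sequence_def)

lemma Dsuc: assumes "D_sequence b" shows "b (Suc n) = b n * (b (Suc n) div b n)"
  using assms by (simp add: D_sequence_def)

lemma DQ2: assumes "D_sequence b" shows "b (Suc n) div b n \<ge> 2"
proof -
  have d: "b n dvd b (Suc n)" "b n \<noteq> b (Suc n)" "b (Suc n) > 0" using assms by (auto simp: D_sequence_def)
  have e: "b (Suc n) = b n * (b (Suc n) div b n)" using d by simp
  have "b (Suc n) div b n \<noteq> 0" using d e by (metis mult_0_right less_irrefl)
  moreover have "b (Suc n) div b n \<noteq> 1" using d e by (metis mult.right_neutral)
  ultimately show ?thesis by linarith
qed

lemma Dsuc_ge: assumes "D_sequence b" shows "2 * b n \<le> b (Suc n)"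
proof -
  have "b (Suc n) = b n * (b (Suc n) div b n)" using Dsuc[OF assms] .
  also have "\<dots> \<ge> b n * 2" using DQ2[OF assms, of n] by simp
  finally show ?thesis by simp
qed

lemma Ddvd: assumes "D_sequence b" "n \<le> N" shows "b n dvd b N"
  using assms(2)
proof (induction N rule: dec_induct)
  case base then show ?case by simp
next
  case (step k)
  have "b k dvd b (Suc k)" using assms(1) by (simp add: D_sequence_def)
  then show ?case using step(3) dvd_trans by blast
qed

lemma Dsum: assumes "D_sequence b" shows "(\<Sum>N<n. real (b (Suc N))) \<le> 2 * real (b n)"
proof (induction n)
  case 0 then show ?case by simp
next
  case (Suc n)
  have "real (2 * b n) \<le> real (b (Suc n))" using Dsuc_ge[OF assms, of n] by linarith
  then show ?case using Suc by simp
qed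

lemma memV:
  assumes D: "D_sequence b" and m: "m \<ge> 1" and B: "finite B"
    and j: "\<And>N. N \<in> B \<Longrightarrow> real_of_int \<bar>j N\<bar> * (8 * real m) \<le> real (b (Suc N)) / real (b N)"
  shows "(\<Sum>N\<in>B. j N * int (b N)) \<in> Vb b m"
  unfolding Vb_def inTm_def
proof (intro CollectI allI impI)
  fix n :: nat assume "n \<ge> 1"
  have bn: "real (b n) > 0" using Dpos[OF D] by simp
  define f where "f N = real_of_int (j N) * real (b N) / real (b n)" for N
  have eq: "real_of_int (\<Sum>N\<in>B. j N * int (b N)) / real (b n) = sum f (B \<inter> {..<n}) + sum f (B - {..<n})"
    unfolding f_def by (simp add: sum_divide_distrib sum.Int_Diff[OF B])
  have "sum f (B - {..<n}) \<in> \<int>"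
  proof (rule Ints_sum)
    fix N assume "N \<in> B - {..<n}"
    then have "b n dvd b N" using Ddvd[OF D] by auto
    then have "real (b N) / real (b n) = real (b N div b n)" by (simp add: real_of_nat_div)
    then have "f N = real_of_int (j N) * real (b N div b n)" unfolding f_def by (metis times_divide_eq_right)
    then show "f N \<in> \<int>" by simp
  qed
  then obtain z where z: "sum f (B - {..<n}) = real_of_int z" by (auto elim: Ints_cases)
  have "\<bar>sum f (B \<inter> {..<n})\<bar> \<le> (\<Sum>N\<in>B \<inter> {..<n}. \<bar>f N\<bar>)" by (rule sum_abs)
  also have "\<dots> \<le> (\<Sum>N\<in>B \<inter> {..<n}. real (b (Suc N)) / (8 * real m * real (b n)))"
  proof (rule sum_mono)
    fix N assume N: "N \<in> B \<inter> {..<n}"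
    have bN: "real (b N) > 0" using Dpos[OF D] by simp
    have "\<bar>f N\<bar> = real_of_int \<bar>j N\<bar> * real (b N) / real (b n)" unfolding f_def by (simp add: abs_mult)
    also have "\<dots> \<le> (real (b (Suc N)) / real (b N) / (8 * real m)) * real (b N) / real (b n)"
      using j[of N] N m bn bN by (intro divide_right_mono mult_right_mono) (auto simp: field_simps)
    also have "\<dots> = real (b (Suc N)) / (8 * real m * real (b n))" using bN by (simp add: field_simps)
    finally show "\<bar>f N\<bar> \<le> real (b (Suc N)) / (8 * real m * real (b n))" .
  qed
  also have "\<dots> \<le> (\<Sum>N<n. real (b (Suc N)) / (8 * real m * real (b n)))"
    by (rule sum_mono2) auto
  also have "\<dots> = (\<Sum>N<n. real (b (Suc N))) / (8 * real m * real (b n))" by (simp add: sum_divide_distrib)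
  also have "\<dots> \<le> 2 * real (b n) / (8 * real m * real (b n))"
    using Dsum[OF D, of n] m bn by (intro divide_right_mono) auto
  also have "\<dots> = 1 / (4 * real m)" using bn by (simp add: field_simps)
  finally have yb: "\<bar>sum f (B \<inter> {..<n})\<bar> \<le> 1 / (4 * real m)" .
  have "tnorm (real_of_int (\<Sum>N\<in>B. j N * int (b N)) / real (b n)) \<le> \<bar>sum f (B \<inter> {..<n})\<bar>"
    using tnorm_le[of "sum f (B \<inter> {..<n}) + real_of_int z" z] unfolding eq z by simp
  then show "tnorm (real_of_int (\<Sum>N\<in>B. j N * int (b N)) / real (b n)) \<le> 1 / (4 * real m)"
    using yb by linarith
qed


lemma ceil_step:
  fixes d t :: real assumes "d \<noteq> 0" "t > 0"
  shows "\<exists>j::int. t \<le> real_of_int j * d \<and> real_of_int j * d < t + \<bar>d\<bar> \<and> real_of_int \<bar>j\<bar> < t/\<bar>d\<bar> + 1"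
proof -
  define a where "a = ceiling (t / \<bar>d\<bar>)"
  have ad: "\<bar>d\<bar> > 0" using assms by simp
  have a1: "t / \<bar>d\<bar> \<le> real_of_int a" "real_of_int a < t/\<bar>d\<bar> + 1" unfolding a_def by linarith+
  have apos: "a \<ge> 0" using a1(1) assms ad by (smt (verit) divide_pos_pos of_int_less_0_iff)
  have l: "t \<le> real_of_int a * \<bar>d\<bar>" using a1(1) ad by (simp add: field_simps)
  have u: "real_of_int a * \<bar>d\<bar> < t + \<bar>d\<bar>" using a1(2) ad by (simp add: field_simps)
  define j where "j = (if d \<ge> 0 then a else -a)"
  have "real_of_int j * d = real_of_int a * \<bar>d\<bar>" unfolding j_def by auto
  moreover have "\<bar>j\<bar> = a" unfolding j_def using apos by auto
  ultimately show ?thesis using l u a1 by (intro exI[of _ j]) simp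
qed

lemma keylemma:
  assumes D: "D_sequence b"
    and lim: "filterlim (\<lambda>n. real (b (Suc n)) / real (b n)) at_top sequentially"
    and m: "m \<ge> 1"
    and V: "\<And>k. k \<in> Vb b m \<Longrightarrow> tnorm (real_of_int k * \<alpha>) < 1/4"
  shows "\<exists>N. real (b N) * \<alpha> \<in> \<int>"
proof (rule ccontr)
  assume nz0: "\<not> (\<exists>N. real (b N) * \<alpha> \<in> \<int>)"
  define R where "R N = round (real (b N) * \<alpha>)" for N
  define \<delta> where "\<delta> N = real (b N) * \<alpha> - real_of_int (R N)" for N
  define r where "r N = real (b (Suc N)) / real (b N)" for N
  have nz: "\<delta> N \<noteq> 0" for N using nz0 unfolding \<delta>_def by (metis Ints_of_int eq_iff_diff_eq_0)
  have dh: "\<bar>\<delta> N\<bar> \<le> 1/2" for N using tnorm_half unfolding \<delta>_def R_def tnorm_def by auto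
  have contra: False if B: "finite B"
     and j: "\<And>N. N \<in> B \<Longrightarrow> real_of_int \<bar>j N\<bar> * (8 * real m) \<le> r N"
     and S: "1/4 \<le> (\<Sum>N\<in>B. real_of_int (j N) * \<delta> N)" "(\<Sum>N\<in>B. real_of_int (j N) * \<delta> N) \<le> 3/4"
     for B j
  proof -
    define k where "k = (\<Sum>N\<in>B. j N * int (b N))"
    have kV: "k \<in> Vb b m" unfolding k_def using memV[OF D m B, of j] j unfolding r_def by blast
    have "real_of_int k * \<alpha> = (\<Sum>N\<in>B. real_of_int (j N) * (real (b N) * \<alpha>))"
      unfolding k_def by (simp add: sum_distrib_right mult.assoc)
    also have "\<dots> = (\<Sum>N\<in>B. real_of_int (j N * R N) + real_of_int (j N) * \<delta> N)"
      by (rule sum.cong) (auto simp: \<delta>_def algebra_simps)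
    also have "\<dots> = real_of_int (\<Sum>N\<in>B. j N * R N) + (\<Sum>N\<in>B. real_of_int (j N) * \<delta> N)"
      by (simp add: sum.distrib)
    finally have "1/4 \<le> tnorm (real_of_int k * \<alpha>)" using tnorm_ge[OF S, of "\<Sum>N\<in>B. j N * R N"] by simp
    then show False using V[OF kV] by simp
  qed
  define c where "c = 1 / (32 * real m)"
  have cpos: "c > 0" using m unfolding c_def by simp
  have "\<forall>\<^sub>F n in sequentially. 8 * real m * (8 * real m + 1) \<le> r n"
    using lim unfolding filterlim_at_top r_def by blast
  then obtain N0 where N0: "\<And>N. N \<ge> N0 \<Longrightarrow> 8 * real m * (8 * real m + 1) \<le> r N"
    unfolding eventually_sequentially by blast
  have small: "\<bar>\<delta> N\<bar> \<le> c" if "N \<ge> N0" for N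
  proof (rule ccontr)
    assume "\<not> \<bar>\<delta> N\<bar> \<le> c"
    then have dc: "c < \<bar>\<delta> N\<bar>" by simp
    obtain a :: int where a: "1/4 \<le> real_of_int a * \<delta> N" "real_of_int a * \<delta> N < 1/4 + \<bar>\<delta> N\<bar>"
       "real_of_int \<bar>a\<bar> < (1/4)/\<bar>\<delta> N\<bar> + 1"
      using ceil_step[OF nz[of N], of "1/4"] by auto
    have "(1/4)/\<bar>\<delta> N\<bar> < (1/4) / c" using dc cpos by (intro divide_strict_left_mono) auto
    also have "(1/4)/c = 8 * real m" unfolding c_def by simp
    finally have "real_of_int \<bar>a\<bar> \<le> 8 * real m + 1" using a(3) by linarith
    then have "real_of_int \<bar>a\<bar> * (8 * real m) \<le> (8 * real m + 1) * (8 * real m)"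
      by (intro mult_right_mono) auto
    also have "\<dots> \<le> r N" using N0[OF that] by (simp add: algebra_simps)
    finally have aj: "real_of_int \<bar>a\<bar> * (8 * real m) \<le> r N" .
    show False
      apply (rule contra[of "{N}" "\<lambda>_. a"])
      using aj a dh[of N] by auto
  qed
  have grow: "\<bar>\<delta> (Suc N)\<bar> \<ge> 2 * \<bar>\<delta> N\<bar>" if "r N * \<bar>\<delta> N\<bar> < 1/2" for N
  proof -
    define q where "q = b (Suc N) div b N"
    have bq: "b (Suc N) = b N * q" unfolding q_def by (rule Dsuc[OF D])
    have q2: "q \<ge> 2" unfolding q_def by (rule DQ2[OF D])
    have bN: "real (b N) > 0" using Dpos[OF D] by simp
    have rq: "r N = real q" unfolding r_def bq using bN by simp
    have e: "real (b (Suc N)) * \<alpha> = real_of_int (int q * R N) + real q * \<delta> N"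
      unfolding bq \<delta>_def by (simp add: algebra_simps)
    have "\<bar>real (b (Suc N)) * \<alpha> - real_of_int (int q * R N)\<bar> < 1/2"
      using that unfolding e rq by (simp add: abs_mult)
    then have "R (Suc N) = int q * R N" unfolding R_def by (rule round_unique')
    moreover have "\<delta> (Suc N) = real (b (Suc N)) * \<alpha> - real_of_int (R (Suc N))" by (simp add: \<delta>_def)
    ultimately have "\<delta> (Suc N) = real q * \<delta> N" using e by simp
    then show ?thesis using q2 by (simp add: abs_mult mult_right_mono)
  qed
  have inf: "infinite {N. N \<ge> N0 \<and> 1/2 \<le> r N * \<bar>\<delta> N\<bar>}"
    unfolding infinite_nat_iff_unbounded_le
  proof (rule allI, rule ccontr)
    fix M assume "\<not> (\<exists>n\<ge>M. n \<in> {N. N \<ge> N0 \<and> 1/2 \<le> r N * \<bar>\<delta> N\<bar>})"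
    then have H: "\<And>n. n \<ge> max M N0 \<Longrightarrow> r n * \<bar>\<delta> n\<bar> < 1/2" by force
    define M' where "M' = max M N0"
    have pw: "\<bar>\<delta> (M' + t)\<bar> \<ge> 2^t * \<bar>\<delta> M'\<bar>" for t
    proof (induction t)
      case 0 then show ?case by simp
    next
      case (Suc t)
      have "2^(Suc t) * \<bar>\<delta> M'\<bar> = 2 * (2^t * \<bar>\<delta> M'\<bar>)" by simp
      also have "\<dots> \<le> 2 * \<bar>\<delta> (M' + t)\<bar>" using Suc by simp
      also have "\<dots> \<le> \<bar>\<delta> (Suc (M' + t))\<bar>" by (rule grow, rule H) (simp add: M'_def)
      finally show ?case by simp
    qed
    have dpos: "\<bar>\<delta> M'\<bar> > 0" using nz by simp
    obtain t where "1 / \<bar>\<delta> M'\<bar> < 2^t" using real_arch_pow[of 2 "1 / \<bar>\<delta> M'\<bar>"] by auto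
    then have "1 < 2^t * \<bar>\<delta> M'\<bar>" using dpos by (simp add: field_simps)
    then show False using pw[of t] dh[of "M' + t"] by linarith
  qed
  obtain B where B: "finite B" "card B = 8 * m" "B \<subseteq> {N. N \<ge> N0 \<and> 1/2 \<le> r N * \<bar>\<delta> N\<bar>}"
    using infinite_arbitrarily_large[OF inf] by blast
  have "\<forall>N\<in>B. \<exists>a::int. c \<le> real_of_int a * \<delta> N \<and> real_of_int a * \<delta> N < c + \<bar>\<delta> N\<bar>
         \<and> real_of_int \<bar>a\<bar> < c/\<bar>\<delta> N\<bar> + 1"
    using ceil_step[OF nz, OF cpos] by blast
  then obtain j where j: "\<And>N. N \<in> B \<Longrightarrow> c \<le> real_of_int (j N) * \<delta> N \<and> real_of_int (j N) * \<delta> N < c + \<bar>\<delta> N\<bar>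
         \<and> real_of_int \<bar>j N\<bar> < c/\<bar>\<delta> N\<bar> + 1" by metis
  have jb: "real_of_int \<bar>j N\<bar> * (8 * real m) \<le> r N" if "N \<in> B" for N
  proof -
    have NB: "N \<ge> N0" "1/2 \<le> r N * \<bar>\<delta> N\<bar>" using B(3) that by auto
    have dp: "\<bar>\<delta> N\<bar> > 0" using nz by simp
    have "real_of_int \<bar>j N\<bar> * (8 * real m) \<le> (c/\<bar>\<delta> N\<bar> + 1) * (8 * real m)"
      using j[OF that] by (intro mult_right_mono) auto
    also have "\<dots> = (c + \<bar>\<delta> N\<bar>) * (8 * real m) / \<bar>\<delta> N\<bar>" using dp by (simp add: field_simps)
    also have "\<dots> \<le> (2 * c) * (8 * real m) / \<bar>\<delta> N\<bar>"
      using small[OF NB(1)] dp m by (intro divide_right_mono mult_right_mono) auto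
    also have "(2 * c) * (8 * real m) = 1/2" unfolding c_def using m by simp
    also have "1/2 / \<bar>\<delta> N\<bar> \<le> r N" using NB(2) dp by (simp add: field_simps)
    finally show ?thesis .
  qed
  have s1: "real (card B) * c \<le> (\<Sum>N\<in>B. real_of_int (j N) * \<delta> N)"
    by (rule sum_bounded_below) (use j in auto)
  have s2: "(\<Sum>N\<in>B. real_of_int (j N) * \<delta> N) \<le> real (card B) * (2 * c)"
  proof (rule sum_bounded_above)
    fix N assume "N \<in> B"
    then show "real_of_int (j N) * \<delta> N \<le> 2 * c" using j[of N] small[of N] B(3) by force
  qed
  have "real (card B) * c = 1/4" "real (card B) * (2 * c) = 1/2" unfolding B(2) c_def using m by auto
  then show False using contra[OF B(1) jb] s1 s2 by auto
qed


lemma ee_cont: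
  assumes "e > 0" shows "\<exists>d>0. \<forall>s. \<bar>s\<bar> < d \<longrightarrow> cmod (ee (c * s) - 1) < e"
proof -
  have "isCont (\<lambda>s. ee (c * s)) 0" unfolding ee_def by (intro continuous_intros)
  then have "(\<lambda>s. ee (c * s)) \<midarrow>0\<rightarrow> ee (c * 0)" unfolding isCont_def .
  from LIM_D[OF this assms] obtain d where d: "d > 0"
    "\<forall>x. x \<noteq> 0 \<and> norm (x - 0) < d \<longrightarrow> cmod (ee (c * x) - ee (c * 0)) < e" by blast
  have e0: "ee 0 = 1" unfolding ee_def by simp
  show ?thesis
  proof (intro exI[of _ d] conjI allI impI d(1))
    fix s :: real assume "\<bar>s\<bar> < d"
    then show "cmod (ee (c * s) - 1) < e" using d(2) e0 assms by (cases "s = 0") auto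
  qed
qed

theorem corollary4p5:
  fixes b :: "nat \<Rightarrow> nat"
  assumes "D_sequence b"
    and "filterlim (\<lambda>n. real (b (Suc n)) / real (b n)) at_top sequentially"
  shows "\<forall>chi. cont_char_Zb b chi \<longrightarrow>
           (\<exists>\<psi>. cont_char_c0T \<psi> \<and> (\<forall>k. chi k = \<psi> (iota b k)))"
proof (intro allI impI)
  fix chi assume cc: "cont_char_Zb b chi"
  have nrm: "\<And>k. cmod (chi k) = 1" and hom: "\<And>k l. chi (k + l) = chi k * chi l"
    and cont: "\<And>k0 \<epsilon>. \<epsilon> > 0 \<Longrightarrow> \<exists>m\<ge>1. \<forall>k\<in>Vb b m. cmod (chi (k0 + k) - chi k0) < \<epsilon>"
    using cc unfolding cont_char_Zb_def by auto
  define \<alpha> where "\<alpha> = Arg (chi 1) / (2 * pi)"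
  have c1: "chi 1 = ee \<alpha>"
  proof -
    have "chi 1 \<noteq> 0" using nrm[of 1] by auto
    then have "cis (Arg (chi 1)) = chi 1" using nrm[of 1] by (simp add: cis_Arg sgn_div_norm)
    then show ?thesis unfolding ee_def \<alpha>_def cis_conv_exp by simp
  qed
  have c0: "chi 0 = 1"
  proof -
    have "chi 0 = chi 0 * chi 0" using hom[of 0 0] by simp
    moreover have "chi 0 \<noteq> 0" using nrm[of 0] by auto
    ultimately show ?thesis by simp
  qed
  have chik: "chi k = ee (real_of_int k * \<alpha>)" for k
  proof (induction k rule: int_induct[where k = 0])
    case base then show ?case using c0 by (simp add: ee_def)
  next
    case (step1 i)
    have "chi (i + 1) = chi i * chi 1" by (rule hom)
    also have "\<dots> = ee (real_of_int i * \<alpha> + \<alpha>)" using step1(2) c1 by (simp add: ee_add)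
    finally show ?case by (simp add: algebra_simps)
  next
    case (step2 i)
    have "chi i = chi (i - 1) * chi 1" using hom[of "i - 1" 1] by simp
    then have "chi (i - 1) * ee \<alpha> = ee (real_of_int (i - 1) * \<alpha>) * ee \<alpha>"
      using step2(2) c1 by (simp add: ee_add[symmetric] algebra_simps)
    moreover have "ee \<alpha> \<noteq> 0" using ee_norm[of \<alpha>] by (metis norm_zero zero_neq_one)
    ultimately show ?case by simp
  qed
  obtain m where m: "m \<ge> 1" "\<forall>k\<in>Vb b m. cmod (chi (0 + k) - chi 0) < 1"
    using cont[of 1 0] by auto
  have V: "tnorm (real_of_int k * \<alpha>) < 1/4" if "k \<in> Vb b m" for k
  proof (rule ccontr)
    assume "\<not> tnorm (real_of_int k * \<alpha>) < 1/4"
    then have "1 \<le> cmod (ee (real_of_int k * \<alpha>) - 1)" by (intro ee_far) simp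
    then show False using m(2) that c0 chik[of k] by auto
  qed
  obtain N where N: "real (b N) * \<alpha> \<in> \<int>" using keylemma[OF assms m(1) V] by blast
  have "real (b (Suc N)) * \<alpha> = real (b (Suc N) div b N) * (real (b N) * \<alpha>)"
    by (subst Dsuc[OF assms(1), of N]) simp
  also have "\<dots> \<in> \<int>" using N by simp
  finally obtain p where p: "real (b (Suc N)) * \<alpha> = real_of_int p" by (auto elim: Ints_cases)
  have bS: "real (b (Suc N)) > 0" using Dpos[OF assms(1)] by simp
  define \<psi> where "\<psi> x = ee (real_of_int p * x N)" for x :: "nat \<Rightarrow> real"
  show "\<exists>\<psi>. cont_char_c0T \<psi> \<and> (\<forall>k. chi k = \<psi> (iota b k))"
  proof (intro exI[of _ \<psi>] conjI allI)
    fix k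
    have "real_of_int p * (real_of_int k / real (b (Suc N))) = real_of_int k * \<alpha>"
      using p[symmetric] bS by (simp add: field_simps)
    then show "chi k = \<psi> (iota b k)" unfolding \<psi>_def iota_def chik by simp
  next
    show "cont_char_c0T \<psi>" unfolding cont_char_c0T_def
    proof (intro conjI ballI allI impI)
      fix x show "cmod (\<psi> x) = 1" unfolding \<psi>_def by simp
    next
      fix x y show "\<psi> (\<lambda>n. x n + y n) = \<psi> x * \<psi> y" unfolding \<psi>_def
        by (simp add: distrib_left ee_add)
    next
      fix x :: "nat \<Rightarrow> real" assume "\<forall>n. x n \<in> \<int>"
      then obtain z where "x N = real_of_int z" by (meson Ints_cases)
      then have "\<psi> x = ee (0 + real_of_int (p * z))" unfolding \<psi>_def by simp
      also have "\<dots> = 1" by (simp only: ee_int) (simp add: ee_def)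
      finally show "\<psi> x = 1" .
    next
      fix x0 :: "nat \<Rightarrow> real" and e :: real assume e: "e > 0"
      obtain d where d: "d > 0" "\<And>s. \<bar>s\<bar> < d \<Longrightarrow> cmod (ee (real_of_int p * s) - 1) < e"
        using ee_cont[OF e, of "real_of_int p"] by blast
      show "\<exists>\<delta>>0. \<forall>y\<in>c0T. (\<forall>n. tnorm (y n - x0 n) < \<delta>) \<longrightarrow> cmod (\<psi> y - \<psi> x0) < e"
      proof (intro exI[of _ d] conjI ballI impI d(1))
        fix y assume "\<forall>n. tnorm (y n - x0 n) < d"
        then have t: "tnorm (y N - x0 N) < d" by blast
        define s where "s = y N - x0 N - real_of_int (round (y N - x0 N))"
        have sd: "\<bar>s\<bar> < d" using t unfolding s_def tnorm_def .
        have "\<psi> y = \<psi> x0 * ee (real_of_int p * s + real_of_int (p * round (y N - x0 N)))"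
          unfolding \<psi>_def s_def by (simp add: ee_add[symmetric] algebra_simps)
        also have "\<dots> = \<psi> x0 * ee (real_of_int p * s)" by (simp only: ee_int)
        finally have "\<psi> y - \<psi> x0 = \<psi> x0 * (ee (real_of_int p * s) - 1)" by (simp add: algebra_simps)
        then have "cmod (\<psi> y - \<psi> x0) = cmod (ee (real_of_int p * s) - 1)"
          unfolding \<psi>_def by (simp add: norm_mult)
        then show "cmod (\<psi> y - \<psi> x0) < e" using d(2)[OF sd] by simp
      qed
    qed
  qed
qed

end
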